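(* Let $n\ge 4$ and let $G$ be a graph having the maximum value of $cM_2$ among all connected graphs of order $n$. Then no two vertices of minimum degree in $G$ are adjacent.
   Context: All graphs are finite and simple. For a graph $G$ and a vertex $u$, $d_u(G)$ denotes the degree of $u$ in $G$. The complementary second Zagreb index of $G$ is $cM_2(G)=\sum_{uv\in E(G)}\left|(d_u(G))^2-(d_v(G))^2\right|$. *)

theory Defs
  imports Main
begin

definition simple_graph :: "'a set \<Rightarrow> 'a set set \<Rightarrow> bool" where
  "simple_graph V E \<longleftrightarrow> finite V \<and> (\<forall>e\<in>E. e \<subseteq> V \<and> card e = 2)"

definition degree :: "'a set set \<Rightarrow> 'a \<Rightarrow> nat" where
  "degree E u = card {e \<in> E. u \<in> e}"

definition adjacent :: "'a set set \<Rightarrow> 'a \<Rightarrow> 'a \<Rightarrow> bool" where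
  "adjacent E u v \<longleftrightarrow> {u, v} \<in> E"

definition connected_graph :: "'a set \<Rightarrow> 'a set set \<Rightarrow> bool" where
  "connected_graph V E \<longleftrightarrow> V \<noteq> {} \<and>
     (\<forall>u\<in>V. \<forall>v\<in>V. (u, v) \<in> {(x, y). adjacent E x y}\<^sup>*)"

definition cM2 :: "'a set set \<Rightarrow> nat" where
  "cM2 E = (\<Sum>e\<in>E. (THE k. \<exists>u v. e = {u, v} \<and> u \<noteq> v \<and>
      int k = \<bar>int (degree E u) ^ 2 - int (degree E v) ^ 2\<bar>))"

end

theory Submission
  imports Defs
begin

definition cc :: "'a set set \<Rightarrow> 'a set \<Rightarrow> nat" where
  "cc E e = (THE k. \<exists>u v. e = {u, v} \<and> u \<noteq> v \<and>
      int k = \<bar>int (degree E u) ^ 2 - int (degree E v) ^ 2\<bar>)"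

lemma cM2_cc: "cM2 E = sum (cc E) E"
  unfolding cM2_def cc_def by simp

lemma cc_pair:
  assumes "a \<noteq> b"
  shows "cc E {a,b} = nat \<bar>int (degree E a)^2 - int (degree E b)^2\<bar>"
  unfolding cc_def
proof (rule the_equality)
  show "\<exists>u v. {a, b} = {u, v} \<and> u \<noteq> v \<and>
      int (nat \<bar>int (degree E a)^2 - int (degree E b)^2\<bar>) = \<bar>int (degree E u) ^ 2 - int (degree E v) ^ 2\<bar>"
    using assms by (intro exI[of _ a] exI[of _ b]) auto
next
  fix k assume "\<exists>u v. {a, b} = {u, v} \<and> u \<noteq> v \<and>
      int k = \<bar>int (degree E u) ^ 2 - int (degree E v) ^ 2\<bar>"
  then obtain u v where h: "{a,b} = {u,v}" "int k = \<bar>int (degree E u) ^ 2 - int (degree E v) ^ 2\<bar>"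
    by blast
  from h(1) have "(a=u \<and> b=v) \<or> (a=v \<and> b=u)" by (auto simp: doubleton_eq_iff)
  then show "k = nat \<bar>int (degree E a)^2 - int (degree E b)^2\<bar>"
    using h(2) by (auto simp: abs_minus_commute)
qed

lemma natabs_mono: "(B::int) \<le> A \<Longrightarrow> A \<le> C \<Longrightarrow> D \<le> B \<Longrightarrow> nat \<bar>A - B\<bar> \<le> nat \<bar>C - D\<bar>"
  by simp

lemma natabs_strict: "(A::int) \<le> Y \<Longrightarrow> 1 \<le> a \<Longrightarrow> nat \<bar>A - Y\<bar> < nat \<bar>A - 2*a + 1 - Y\<bar>"
  by simp

lemma arith_mono:
  fixes p q p' q' :: nat
  assumes "q \<le> p" "p \<le> p'" "q' \<le> q"
  shows "nat \<bar>int p^2 - int q^2\<bar> \<le> nat \<bar>int p'^2 - int q'^2\<bar>"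
proof -
  have "int q'^2 \<le> int q^2" "int q^2 \<le> int p^2" "int p^2 \<le> int p'^2"
    using assms by (auto intro!: power_mono)
  then show ?thesis by (intro natabs_mono)
qed

lemma arith_mono2:
  fixes p q p' q' :: nat
  assumes "q \<le> p" "p \<le> p'" "q' \<le> q"
  shows "nat \<bar>int q^2 - int p^2\<bar> \<le> nat \<bar>int q'^2 - int p'^2\<bar>"
  using arith_mono[OF assms] by (simp add: abs_minus_commute)

lemma arith_strict:
  fixes d q :: nat
  assumes "1 \<le> q" "q \<le> d"
  shows "nat \<bar>int q^2 - int d^2\<bar> < nat \<bar>int (q - 1)^2 - int d^2\<bar>"
proof -
  have "int q^2 \<le> int d^2" using assms by (auto intro!: power_mono)
  moreover have "int (q - 1)^2 = int q^2 - 2 * int q + 1" using assms by (simp add: of_nat_diff power2_diff)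
  moreover have "1 \<le> int q" using assms by simp
  ultimately show ?thesis using natabs_strict[of "int q^2" "int d^2" "int q"] by simp
qed

lemma arith_pos:
  fixes p q :: nat
  assumes "q < p"
  shows "0 < nat \<bar>int q^2 - int p^2\<bar>"
proof -
  have "int q^2 < int p^2" using assms by (auto intro!: power_strict_mono)
  then show ?thesis using assms by simp
qed

lemma degree_insert:
  assumes "finite E" "e \<notin> E"
  shows "degree (insert e E) a = degree E a + (if a \<in> e then 1 else 0)"
proof -
  have "{e' \<in> insert e E. a \<in> e'} = (if a \<in> e then insert e {e' \<in> E. a \<in> e'} else {e' \<in> E. a \<in> e'})"
    by auto
  then show ?thesis using assms unfolding degree_def by (simp add: card_insert_disjoint)
qed

lemma degree_remove:
  assumes "finite E" "e \<in> E"
  shows "degree (E - {e}) a = degree E a - (if a \<in> e then 1 else 0)"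
proof -
  have "{e' \<in> E - {e}. a \<in> e'} = {e' \<in> E. a \<in> e'} - {e}"
    by auto
  then show ?thesis using assms unfolding degree_def
    by (auto simp: card_Diff_singleton)
qed

lemma improve:
  assumes sg: "\<forall>e\<in>E. e \<subseteq> V \<and> card e = 2"
  and H1: "\<forall>a. a \<in> {u,v} \<longrightarrow> degree E' a \<le> degree E a"
  and H2: "\<forall>a. a \<notin> {u,v} \<longrightarrow> degree E a \<le> degree E' a"
  and H3: "\<forall>a. a \<notin> {u,v,x} \<longrightarrow> degree E' a = degree E a"
  and H4: "\<forall>a\<in>V. degree E u \<le> degree E a \<and> degree E v \<le> degree E a \<and> degree E a \<le> degree E x"
  shows "\<forall>e \<in> E - {{u,v}}. cc E e \<le> cc E' e"
proof
  fix e assume e: "e \<in> E - {{u,v}}"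
  then obtain a b where ab: "e = {a,b}" "a \<noteq> b" using sg by (meson DiffD1 card_2_iff)
  have abV: "a \<in> V" "b \<in> V" using sg e ab by auto
  have ne: "{a,b} \<noteq> {u,v}" using e ab by auto
  show "cc E e \<le> cc E' e"
    unfolding ab cc_pair[OF ab(2)]
  proof (cases "a \<in> {u,v}")
    case True
    then have "b \<notin> {u,v}" using ne ab(2) by auto
    then show "nat \<bar>int (degree E a)^2 - int (degree E b)^2\<bar> \<le> nat \<bar>int (degree E' a)^2 - int (degree E' b)^2\<bar>"
      using True H1 H2 H4 abV by (intro arith_mono2) auto
  next
    case aF: False
    show "nat \<bar>int (degree E a)^2 - int (degree E b)^2\<bar> \<le> nat \<bar>int (degree E' a)^2 - int (degree E' b)^2\<bar>"
    proof (cases "b \<in> {u,v}")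
      case True
      then show ?thesis
        using aF H1 H2 H4 abV by (intro arith_mono) auto
    next
      case bF: False
      show ?thesis
      proof (cases "a = x")
        case True
        then have "b \<notin> {u,v,x}" using bF ab(2) by auto
        then show ?thesis using True aF H2 H3 H4 abV by (intro arith_mono) auto
      next
        case ax: False
        show ?thesis
        proof (cases "b = x")
          case True
          then have "a \<notin> {u,v,x}" using aF ab(2) by auto
          then show ?thesis using True bF H2 H3 H4 abV by (intro arith_mono2) auto
        next
          case False
          then show ?thesis using ax aF bF H3 by simp
        qed
      qed
    qed
  qed
qed

lemma conn_keep:
  assumes "connected_graph V E" "E - {{u,v}} \<subseteq> E'" "{u,x} \<in> E'" "{x,v} \<in> E'"
  shows "connected_graph V E'"
proof -
  let ?R = "{(a, b). adjacent E a b}"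
  let ?R' = "{(a, b). adjacent E' a b}"
  have "?R \<subseteq> ?R'\<^sup>*"
  proof
    fix p assume "p \<in> ?R"
    then obtain a b where p: "p = (a,b)" "{a,b} \<in> E" by (auto simp: adjacent_def)
    show "p \<in> ?R'\<^sup>*"
    proof (cases "{a,b} = {u,v}")
      case True
      then have "(a=u \<and> b=v) \<or> (a=v \<and> b=u)" by (auto simp: doubleton_eq_iff)
      moreover have "{x,u} \<in> E'" "{v,x} \<in> E'" using assms by (auto simp: insert_commute)
      ultimately have "(a,x) \<in> ?R'" "(x,b) \<in> ?R'" using assms by (auto simp: adjacent_def)
      then show ?thesis using p by (meson r_into_rtrancl rtrancl_trans)
    next
      case False
      then have "(a,b) \<in> ?R'" using p assms by (auto simp: adjacent_def)
      then show ?thesis using p by auto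
    qed
  qed
  then have "?R\<^sup>* \<subseteq> ?R'\<^sup>*" by (rule rtrancl_subset_rtrancl)
  then show ?thesis using assms(1) unfolding connected_graph_def by blast
qed

theorem proposition2:
  fixes V :: "'a set" and E :: "'a set set" and n :: nat
  assumes "n \<ge> 4"
    and "simple_graph V E" and "connected_graph V E" and "card V = n"
    and "\<forall>(V' :: 'a set) E'. simple_graph V' E' \<and> connected_graph V' E' \<and> card V' = n
               \<longrightarrow> cM2 E' \<le> cM2 E"
  shows "\<forall>u\<in>V. \<forall>v\<in>V.
           degree E u = (MIN w\<in>V. degree E w) \<and> degree E v = (MIN w\<in>V. degree E w)
           \<longrightarrow> \<not> adjacent E u v"
proof (intro ballI impI notI)
  fix u v assume uV: "u \<in> V" and vV: "v \<in> V"
    and md: "degree E u = (MIN w\<in>V. degree E w) \<and> degree E v = (MIN w\<in>V. degree E w)"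
    and adj: "adjacent E u v"
  define D where "D = degree E"
  define m where "m = (MIN w\<in>V. degree E w)"
  have finV: "finite V" and sg: "\<forall>e\<in>E. e \<subseteq> V \<and> card e = 2"
    using assms(2) unfolding simple_graph_def by auto
  have finE: "finite E"
    using sg finV by (meson PowI finite_Pow_iff finite_subset subsetI)
  have uvE: "{u,v} \<in> E" using adj unfolding adjacent_def .
  have uv: "u \<noteq> v" using sg uvE by fastforce
  have Du: "D u = m" and Dv: "D v = m" using md unfolding D_def m_def by auto
  have minle: "\<forall>a\<in>V. m \<le> D a" unfolding m_def D_def using finV by auto
  have Du1: "1 \<le> D u"
  proof -
    have "{u,v} \<in> {e \<in> E. u \<in> e}" using uvE by auto
    moreover have "finite {e \<in> E. u \<in> e}" using finE by auto
    ultimately show ?thesis unfolding D_def degree_def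
      by (metis One_nat_def Suc_leI card_gt_0_iff empty_iff)
  qed
  have ne: "V - {u,v} \<noteq> {}"
  proof
    assume "V - {u,v} = {}"
    then have "V \<subseteq> {u,v}" by auto
    then have "card V \<le> card {u,v}" by (intro card_mono) auto
    also have "\<dots> \<le> 2" by (simp add: card_insert_le_m1)
    finally show False using assms(1,4) by simp
  qed
  define M where "M = Max (D ` (V - {u,v}))"
  have "M \<in> D ` (V - {u,v})" unfolding M_def using ne finV by (intro Max_in) auto
  then obtain x where xV: "x \<in> V" and xu: "x \<noteq> u" and xv: "x \<noteq> v" and Dx: "D x = M" by auto
  have Mge: "\<forall>y\<in>V - {u,v}. D y \<le> M" unfolding M_def using finV by auto
  have mx: "m \<le> D x" using minle xV by auto
  have H4: "\<forall>a\<in>V. D u \<le> D a \<and> D v \<le> D a \<and> D a \<le> D x"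
    using Du Dv minle Mge Dx mx by auto
  define E0 where "E0 = E - {{u,v}}"
  have finE0: "finite E0" using finE unfolding E0_def by auto
  have cE: "cM2 E = sum (cc E) E0"
  proof -
    have "cM2 E = cc E {u,v} + sum (cc E) E0" unfolding cM2_cc E0_def
      using finE uvE by (simp add: sum.remove)
    moreover have "cc E {u,v} = 0" using uv Du Dv by (simp add: cc_pair D_def)
    ultimately show ?thesis by simp
  qed
  have key: "\<And>E'. simple_graph V E' \<Longrightarrow> connected_graph V E' \<Longrightarrow> sum (cc E) E0 < cM2 E' \<Longrightarrow> False"
    using assms(4,5) cE by fastforce
  have ux2: "card {u,x} = 2" and vx2: "card {v,x} = 2" using xu xv by auto
  have uxne: "{u,x} \<noteq> {u,v}" and vxne: "{v,x} \<noteq> {u,v}" and uvx: "{u,x} \<noteq> {v,x}"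
    using xu xv uv by (auto simp: doubleton_eq_iff)
  show False
  proof (cases "{u,x} \<in> E")
    case uxE: True
    show False
    proof (cases "{v,x} \<in> E")
      case vxE: True
      have deg: "\<And>a. degree E0 a = D a - (if a \<in> {u,v} then 1 else 0)"
        unfolding E0_def D_def using finE uvE by (simp add: degree_remove)
      have sg': "simple_graph V E0" using finV sg unfolding simple_graph_def E0_def by auto
      have cn': "connected_graph V E0"
        using assms(3) uxE vxE uxne vxne by (intro conn_keep[of V E u v E0 x]) (auto simp: E0_def insert_commute)
      have mono: "\<forall>e \<in> E0. cc E e \<le> cc E0 e"
        unfolding E0_def
        by (rule improve[OF sg, of u v _ x]) (use deg H4 in \<open>auto simp: D_def E0_def\<close>)
      have "{u,x} \<in> E0" using uxE uxne unfolding E0_def by auto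
      moreover have "cc E {u,x} < cc E0 {u,x}"
      proof -
        have "cc E {u,x} = nat \<bar>int m^2 - int (D x)^2\<bar>" using xu Du by (simp add: cc_pair D_def)
        moreover have "cc E0 {u,x} = nat \<bar>int (m - 1)^2 - int (D x)^2\<bar>"
          using xu Du deg[of u] deg[of x] xv by (simp add: cc_pair)
        ultimately show ?thesis using arith_strict[of m "D x"] Du1 Du mx by simp
      qed
      ultimately have "sum (cc E) E0 < sum (cc E0) E0"
        using mono finE0 by (intro sum_strict_mono_ex1) auto
      then show False using key[OF sg' cn'] by (simp add: cM2_cc)
    next
      case vxE: False
      define E' where "E' = insert {v,x} E0"
      have vx0: "{v,x} \<notin> E0" using vxE unfolding E0_def by auto
      have deg: "\<And>a. degree E' a = D a - (if a \<in> {u,v} then 1 else 0) + (if a \<in> {v,x} then 1 else 0)"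
        unfolding E'_def using finE0 vx0 by (simp add: degree_insert degree_remove E0_def finE uvE D_def)
      have sg': "simple_graph V E'" using finV sg vV xV vx2 unfolding simple_graph_def E0_def E'_def by auto
      have cn': "connected_graph V E'"
        using assms(3) uxE uxne by (intro conn_keep[of V E u v E' x]) (auto simp: E0_def E'_def insert_commute)
      have mono: "\<forall>e \<in> E0. cc E e \<le> cc E' e"
        unfolding E0_def
        by (rule improve[OF sg, of u v _ x]) (use deg H4 Du1 Du Dv xu xv uv in \<open>auto simp: D_def E0_def E'_def\<close>)
      have "sum (cc E) E0 \<le> sum (cc E') E0" using mono by (intro sum_mono) auto
      moreover have "0 < cc E' {v,x}"
      proof -
        have lt: "degree E' v < degree E' x" using deg[of v] deg[of x] Du1 Du Dv mx xu xv uv by simp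
        have ne: "v \<noteq> x" using xu xv by auto
        show ?thesis unfolding cc_pair[OF ne] using lt by (rule arith_pos)
      qed
      ultimately have "sum (cc E) E0 < cM2 E'"
        unfolding cM2_cc E'_def using finE0 vx0 by simp
      then show False using key[OF sg' cn'] by simp
    qed
  next
    case uxE: False
    show False
    proof (cases "{v,x} \<in> E")
      case vxE: True
      define E' where "E' = insert {u,x} E0"
      have ux0: "{u,x} \<notin> E0" using uxE unfolding E0_def by auto
      have deg: "\<And>a. degree E' a = D a - (if a \<in> {u,v} then 1 else 0) + (if a \<in> {u,x} then 1 else 0)"
        unfolding E'_def using finE0 ux0 by (simp add: degree_insert degree_remove E0_def finE uvE D_def)
      have sg': "simple_graph V E'" using finV sg uV xV ux2 unfolding simple_graph_def E0_def E'_def by auto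
      have cn': "connected_graph V E'"
        using assms(3) vxE vxne by (intro conn_keep[of V E u v E' x]) (auto simp: E0_def E'_def insert_commute)
      have mono: "\<forall>e \<in> E0. cc E e \<le> cc E' e"
        unfolding E0_def
        by (rule improve[OF sg, of u v _ x]) (use deg H4 Du1 Du Dv xu xv uv in \<open>auto simp: D_def E0_def E'_def\<close>)
      have "sum (cc E) E0 \<le> sum (cc E') E0" using mono by (intro sum_mono) auto
      moreover have "0 < cc E' {u,x}"
      proof -
        have lt: "degree E' u < degree E' x" using deg[of u] deg[of x] Du1 Du Dv mx xu xv uv by simp
        have ne: "u \<noteq> x" using xu xv by auto
        show ?thesis unfolding cc_pair[OF ne] using lt by (rule arith_pos)
      qed
      ultimately have "sum (cc E) E0 < cM2 E'"
        unfolding cM2_cc E'_def using finE0 ux0 by simp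
      then show False using key[OF sg' cn'] by simp
    next
      case vxE: False
      define E' where "E' = insert {u,x} (insert {v,x} E0)"
      have vx0: "{v,x} \<notin> E0" using vxE unfolding E0_def by auto
      have ux0: "{u,x} \<notin> insert {v,x} E0" using uxE uvx unfolding E0_def by auto
      have deg: "\<And>a. degree E' a = D a - (if a \<in> {u,v} then 1 else 0) + (if a \<in> {v,x} then 1 else 0)
                     + (if a \<in> {u,x} then 1 else 0)"
        unfolding E'_def using finE0 ux0 vx0
        by (simp add: degree_insert degree_remove E0_def finE uvE D_def)
      have sg': "simple_graph V E'" using finV sg uV vV xV ux2 vx2 unfolding simple_graph_def E0_def E'_def by auto
      have cn': "connected_graph V E'"
        using assms(3) by (intro conn_keep[of V E u v E' x]) (auto simp: E0_def E'_def insert_commute)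
      have mono: "\<forall>e \<in> E0. cc E e \<le> cc E' e"
        unfolding E0_def
        by (rule improve[OF sg, of u v _ x]) (use deg H4 Du1 Du Dv xu xv uv in \<open>auto simp: D_def E0_def E'_def\<close>)
      have "sum (cc E) E0 \<le> sum (cc E') E0" using mono by (intro sum_mono) auto
      moreover have "0 < cc E' {v,x}"
      proof -
        have lt: "degree E' v < degree E' x" using deg[of v] deg[of x] Du1 Du Dv mx xu xv uv by simp
        have ne: "v \<noteq> x" using xu xv by auto
        show ?thesis unfolding cc_pair[OF ne] using lt by (rule arith_pos)
      qed
      ultimately have "sum (cc E) E0 < cM2 E'"
        unfolding cM2_cc E'_def using finE0 ux0 vx0 by simp
      then show False using key[OF sg' cn'] by simp
    qed
  qed
qed

end
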